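(* Let $0<\theta<\tfrac12$, $\alpha>0$, $\beta\in\mathbb{R}$, and let $0\le\phi\le 1$ be smooth with compact support in $[1,2]$. Then $$\sum_{\ell\in\mathbb{Z}}|M_\theta(\tfrac12+i(\alpha\ell+\beta))|^2\phi\Big(\frac{\ell}{T}\Big)\ll T\log T.$$
   Context: $M_\theta(s)=\sum_{n\le T^{\theta}}\frac{\mu(n)}{n^s}\big(1-\frac{\log n}{\log T^{\theta}}\big)$ with $\mu$ the Möbius function. *)

theory Defs
  imports "HOL-Analysis.Analysis" "HOL-Computational_Algebra.Squarefree"
begin

definition moebius_mu :: "nat \<Rightarrow> int" where
  "moebius_mu n = (if n > 0 \<and> squarefree n then (-1) ^ card (prime_factors n) else 0)"

definition M_theta :: "real \<Rightarrow> real \<Rightarrow> complex \<Rightarrow> complex" where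
  "M_theta \<theta> T s = (\<Sum>n\<in>{1..nat \<lfloor>T powr \<theta>\<rfloor>}.
      of_int (moebius_mu n) / (of_nat n powr s)
      * complex_of_real (1 - ln (real n) / ln (T powr \<theta>)))"

definition smooth_fun :: "(real \<Rightarrow> real) \<Rightarrow> bool" where
  "smooth_fun f \<longleftrightarrow> (\<forall>k. ((deriv ^^ k) f) differentiable_on UNIV)"

end

theory Submission
  imports Defs
begin


lemma tele:
  fixes a x c :: real
  shows "2 * sin (x/2) * (\<Sum>j<H. cos ((a + real j) * x + c))
       = sin ((a + real H - 1/2) * x + c) - sin ((a - 1/2) * x + c)"
proof (induction H)
  case 0 then show ?case by simp
next
  case (Suc H)
  have e: "2 * sin (x/2) * cos ((a + real H) * x + c)
        = sin ((a + real H + 1/2) * x + c) - sin ((a + real H - 1/2) * x + c)"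
  proof -
    have 1: "(a + real H + 1/2) * x + c = ((a + real H) * x + c) + x/2" by (simp add: algebra_simps)
    have 2: "(a + real H - 1/2) * x + c = ((a + real H) * x + c) - x/2" by (simp add: algebra_simps)
    show ?thesis unfolding 1 2 sin_add sin_diff by (simp add: algebra_simps)
  qed
  have "2 * sin (x/2) * (\<Sum>j<Suc H. cos ((a + real j) * x + c))
       = 2 * sin (x/2) * (\<Sum>j<H. cos ((a + real j) * x + c)) + 2 * sin (x/2) * cos ((a + real H) * x + c)"
    by (simp add: algebra_simps)
  also have "\<dots> = sin ((a + real (Suc H) - 1/2) * x + c) - sin ((a - 1/2) * x + c)"
    unfolding Suc e by (simp add: algebra_simps)
  finally show ?case .
qed

lemma tele_bound:
  fixes a x c :: real
  shows "\<bar>sin (x/2)\<bar> * \<bar>\<Sum>j<H. cos ((a + real j) * x + c)\<bar> \<le> 1"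
proof -
  have "\<bar>2 * sin (x/2) * (\<Sum>j<H. cos ((a + real j) * x + c))\<bar> \<le> 2"
    unfolding tele using abs_sin_le_one[of "(a + real H - 1/2) * x + c"] abs_sin_le_one[of "(a - 1/2) * x + c"]
    by linarith
  then show ?thesis by (simp add: abs_mult)
qed

lemma tele_bound2:
  fixes a x c :: real
  shows "\<bar>\<Sum>j<H. cos ((a + real j) * x + c)\<bar> \<le> real H"
proof -
  have "\<bar>\<Sum>j<H. cos ((a + real j) * x + c)\<bar> \<le> (\<Sum>j<H. \<bar>cos ((a + real j) * x + c)\<bar>)" by (rule sum_abs)
  also have "\<dots> \<le> (\<Sum>j<H. 1)" by (intro sum_mono) simp
  finally show ?thesis by simp
qed


definition av :: "real \<Rightarrow> real \<Rightarrow> nat \<Rightarrow> real" where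
  "av \<theta> T n = of_int (moebius_mu n) * (1 - ln (real n) / ln (T powr \<theta>)) / sqrt (real n)"

lemma npowr_eq:
  assumes "n \<ge> 1"
  shows "(of_nat n :: complex) powr (Complex (1/2) t) = complex_of_real (sqrt (real n)) * cis (t * ln (real n))"
proof -
  have "(of_nat n :: complex) powr (Complex (1/2) t) = exp (Complex (1/2) t * of_real (ln (real n)))"
    using assms by (simp add: powr_def)
  also have "\<dots> = exp (Re (Complex (1/2) t * of_real (ln (real n)))) * cis (Im (Complex (1/2) t * of_real (ln (real n))))"
    by (rule exp_eq_polar)
  also have "Re (Complex (1/2) t * of_real (ln (real n))) = ln (real n) / 2" by simp
  also have "Im (Complex (1/2) t * of_real (ln (real n))) = t * ln (real n)" by simp
  also have "exp (ln (real n) / 2) = sqrt (real n)"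
  proof -
    have "sqrt (real n) = real n powr (1/2)" using powr_half_sqrt by simp
    also have "\<dots> = exp (ln (real n) / 2)" using assms by (simp add: powr_def)
    finally show ?thesis by simp
  qed
  finally show ?thesis by simp
qed

lemma M_eq:
  "M_theta \<theta> T (Complex (1/2) t) = (\<Sum>n\<in>{1..nat \<lfloor>T powr \<theta>\<rfloor>}. complex_of_real (av \<theta> T n) * cis (-(t * ln (real n))))"
  unfolding M_theta_def
proof (rule sum.cong[OF refl])
  fix n assume "n \<in> {1..nat \<lfloor>T powr \<theta>\<rfloor>}"
  then have n: "n \<ge> 1" by simp
  have s: "sqrt (real n) > 0" using n by simp
  show "of_int (moebius_mu n) / of_nat n powr Complex (1 / 2) t * complex_of_real (1 - ln (real n) / ln (T powr \<theta>))
        = complex_of_real (av \<theta> T n) * cis (- (t * ln (real n)))"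
    unfolding npowr_eq[OF n] av_def using s
    by (simp add: field_simps cis_neq_zero flip: cis_inverse)
qed

lemma cmod_sq:
  "(cmod (M_theta \<theta> T (Complex (1/2) t)))\<^sup>2 =
     (\<Sum>m\<in>{1..nat \<lfloor>T powr \<theta>\<rfloor>}. \<Sum>n\<in>{1..nat \<lfloor>T powr \<theta>\<rfloor>}.
        av \<theta> T m * av \<theta> T n * cos (t * (ln (real m) - ln (real n))))"
proof -
  define A where "A = {1..nat \<lfloor>T powr \<theta>\<rfloor>}"
  have "(cmod (M_theta \<theta> T (Complex (1/2) t)))\<^sup>2 =
     (\<Sum>n\<in>A. av \<theta> T n * cos (t * ln (real n)))\<^sup>2 + (\<Sum>n\<in>A. av \<theta> T n * sin (t * ln (real n)))\<^sup>2"
    unfolding cmod_power2 M_eq A_def[symmetric] by (simp add: sum_negf power2_eq_square)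
  also have "\<dots> = (\<Sum>m\<in>A. \<Sum>n\<in>A. av \<theta> T m * av \<theta> T n * cos (t * (ln (real m) - ln (real n))))"
    unfolding power2_eq_square sum_product sum.distrib[symmetric] right_diff_distrib cos_diff
    by (intro sum.cong refl) (simp add: algebra_simps)
  finally show ?thesis unfolding A_def .
qed


lemma sin_lower:
  fixes y :: real assumes "\<bar>y\<bar> \<le> 2"
  shows "\<bar>y\<bar> / 3 \<le> \<bar>sin y\<bar>"
proof -
  have h0: "\<bar>sin y - (\<Sum>m<3. sin_coeff m * y ^ m)\<bar> \<le> inverse (fact 3) * \<bar>y\<bar> ^ 3"
    by (rule Maclaurin_sin_bound)
  have s3: "(\<Sum>m<3. sin_coeff m * y ^ m) = y"
    by (simp add: eval_nat_numeral sin_coeff_def)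
  have f3: "inverse (fact 3 :: real) = 1/6" by (simp add: eval_nat_numeral)
  have h: "\<bar>sin y - y\<bar> \<le> \<bar>y\<bar> ^ 3 / 6" using h0 unfolding s3 f3 by simp
  have "\<bar>y\<bar> ^ 3 = \<bar>y\<bar> * \<bar>y\<bar>^2" by (simp add: power3_eq_cube power2_eq_square)
  moreover have "\<bar>y\<bar>^2 \<le> 4" using power_mono[OF assms, of 2] by simp
  ultimately have "\<bar>y\<bar> ^ 3 \<le> \<bar>y\<bar> * 4" by (simp add: mult_left_mono)
  with h show ?thesis by linarith
qed

definition near1 :: "real \<Rightarrow> nat \<Rightarrow> nat \<Rightarrow> nat \<Rightarrow> bool" where
  "near1 \<alpha> KM m n \<longleftrightarrow> (\<exists>k\<le>KM. \<bar>real n - real m * exp (pi/\<alpha>) ^ (2*k)\<bar> < 1)"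

lemma ln_gap:
  fixes u v :: real assumes "0 < u" "0 < v" "1 \<le> \<bar>u - v\<bar>"
  shows "1 / max u v \<le> \<bar>ln u - ln v\<bar>"
proof (cases "v \<le> u")
  case True
  have "ln (v/u) \<le> v/u - 1" using assms by (intro ln_le_minus_one) simp
  then have "ln u - ln v \<ge> (u - v)/u" using assms by (simp add: ln_div field_simps)
  moreover have "(u - v)/u \<ge> 1/u" using assms True by (simp add: divide_right_mono)
  ultimately show ?thesis using True assms by (simp add: max_def)
next
  case False
  have "ln (u/v) \<le> u/v - 1" using assms by (intro ln_le_minus_one) simp
  then have "ln v - ln u \<ge> (v - u)/v" using assms by (simp add: ln_div field_simps)
  moreover have "(v - u)/v \<ge> 1/v" using assms False by (simp add: divide_right_mono)
  ultimately show ?thesis using False assms by (simp add: max_def)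
qed

lemma pt_le:
  fixes \<alpha> H S :: real and N m n KM :: nat
  assumes a: "\<alpha> > 0" and m: "1 \<le> m" "m \<le> n" "n \<le> N"
    and S1: "\<bar>S\<bar> \<le> H" and S2: "\<bar>sin (\<alpha> * (ln (real n) - ln (real m)) / 2)\<bar> * \<bar>S\<bar> \<le> 1"
    and KM: "\<alpha> * (ln (real n) - ln (real m)) / (2*pi) + 1/2 \<le> real KM"
  shows "\<bar>S\<bar> \<le> H * (if near1 \<alpha> KM m n then 1 else 0) + 6 * exp (pi/\<alpha>) / \<alpha> * real N"
proof -
  define E where "E = exp (pi/\<alpha>)"
  have E1: "E \<ge> 1" unfolding E_def using a by simp
  have H0: "H \<ge> 0" using S1 by linarith
  have "0 \<le> 6 * E / \<alpha> * real N" using a E1 by simp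
  define x where "x = \<alpha> * (ln (real n) - ln (real m)) / (2*pi)"
  have x0: "x \<ge> 0" unfolding x_def using a m by (simp add: divide_nonneg_pos)
  define k where "k = nat \<lfloor>x + 1/2\<rfloor>"
  have kle: "real k \<le> x + 1/2" unfolding k_def using x0 by linarith
  have kge: "real k > x - 1/2" unfolding k_def using x0 by linarith
  have kKM: "k \<le> KM" using kle KM unfolding x_def by linarith
  define y where "y = real m * E ^ (2*k)"
  have y0: "y > 0" unfolding y_def using m E1 by simp
  have lny: "ln y = ln (real m) + 2 * real k * (pi/\<alpha>)"
    unfolding y_def E_def using m by (simp add: ln_mult ln_realpow)
  show ?thesis
  proof (cases "\<bar>real n - y\<bar> < 1")
    case True
    then have "near1 \<alpha> KM m n" unfolding near1_def using kKM by (auto simp: y_def E_def)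
    then show ?thesis using S1 \<open>0 \<le> 6 * E / \<alpha> * real N\<close> unfolding E_def by simp
  next
    case False
    have n0: "real n > 0" using m by simp
    have "ln y \<le> ln (real n) + pi/\<alpha>"
    proof -
      have "2 * real k * (pi/\<alpha>) \<le> (2*x+1) * (pi/\<alpha>)" using kle a by (intro mult_right_mono) auto
      also have "\<dots> = ln (real n) - ln (real m) + pi/\<alpha>" unfolding x_def using a by (simp add: field_simps)
      finally show ?thesis using lny by linarith
    qed
    then have "exp (ln y) \<le> exp (ln (real n) + pi/\<alpha>)" by simp
    then have yE: "y \<le> real n * E" unfolding E_def using y0 n0 by (simp add: exp_add)
    have nNE: "real n * E \<le> real N * E" using m E1 by (intro mult_right_mono) auto
    moreover have "real n \<le> real n * E" using E1 n0 by simp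
    ultimately have "real n \<le> real N * E" by linarith
    moreover note nNE
    ultimately have ymax: "max (real n) y \<le> real N * E" using yE by simp
    have gap: "1 / max (real n) y \<le> \<bar>ln (real n) - ln y\<bar>" using ln_gap[of "real n" y] n0 y0 False by simp
    have NE0: "real N * E > 0" using m E1 by simp
    have gap2: "1 / (real N * E) \<le> \<bar>ln (real n) - ln y\<bar>"
    proof -
      have "1 / (real N * E) \<le> 1 / max (real n) y"
        using ymax n0 by (intro divide_left_mono) auto
      then show ?thesis using gap by linarith
    qed
    have xk: "x - real k = \<alpha> / (2*pi) * (ln (real n) - ln y)"
      unfolding x_def lny using a by (simp add: field_simps)
    have xk1: "\<bar>x - real k\<bar> \<ge> \<alpha> / (2*pi) * (1 / (real N * E))"
    proof -
      have c0: "0 \<le> \<alpha>/(2*pi)" using a by simp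
      have "\<bar>x - real k\<bar> = \<alpha>/(2*pi) * \<bar>ln (real n) - ln y\<bar>" unfolding xk abs_mult using c0 a by simp
      then show ?thesis using mult_left_mono[OF gap2 c0] by linarith
    qed
    have sineq: "\<bar>sin (\<alpha> * (ln (real n) - ln (real m)) / 2)\<bar> = \<bar>sin (pi * (x - real k))\<bar>"
    proof -
      have e: "\<alpha> * (ln (real n) - ln (real m)) / 2 = pi * (x - real k) + real k * pi"
        unfolding x_def by (simp add: field_simps)
      have "sin (pi * (x - real k) + real k * pi) = sin (pi * (x - real k)) * (-1) ^ k"
        by (simp add: sin_add)
      then show ?thesis unfolding e by (simp add: abs_mult)
    qed
    have xk2: "\<bar>x - real k\<bar> \<le> 1/2" using kle kge by linarith
    have pb: "\<bar>pi * (x - real k)\<bar> \<le> 2"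
    proof -
      have "\<bar>pi * (x - real k)\<bar> = pi * \<bar>x - real k\<bar>" by (simp add: abs_mult)
      also have "\<dots> \<le> pi * (1/2)" using xk2 by (intro mult_left_mono) auto
      finally show ?thesis using pi_less_4 by linarith
    qed
    have sl0: "\<bar>pi * (x - real k)\<bar> / 3 \<le> \<bar>sin (pi * (x - real k))\<bar>" by (rule sin_lower[OF pb])
    have "pi * (\<alpha> / (2*pi) * (1 / (real N * E))) \<le> pi * \<bar>x - real k\<bar>"
      using xk1 by (intro mult_left_mono) auto
    also have "\<dots> = \<bar>pi * (x - real k)\<bar>" by (simp add: abs_mult)
    finally have sl1: "pi * (\<alpha> / (2*pi) * (1 / (real N * E))) / 3 \<le> \<bar>pi * (x - real k)\<bar> / 3"
      by (rule divide_right_mono) simp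
    have e3: "pi * (\<alpha> / (2*pi) * (1 / (real N * E))) / 3 = \<alpha> / (6 * E * real N)" by (simp add: field_simps)
    have sl: "\<alpha> / (6 * E * real N) \<le> \<bar>sin (\<alpha> * (ln (real n) - ln (real m)) / 2)\<bar>"
      using sineq sl0 sl1 e3 by linarith
    have eq: "6 * E * real N = 6 * (real N * E)" by simp
    have pos0: "6 * E * real N > 0" unfolding eq using NE0 by simp
    then have pos: "\<alpha> / (6 * E * real N) > 0" using a by simp
    have "\<alpha> / (6 * E * real N) * \<bar>S\<bar> \<le> 1"
      using S2 mult_right_mono[OF sl abs_ge_zero[of S]] by linarith
    then have "\<bar>S\<bar> * (\<alpha> / (6 * E * real N)) \<le> 1" by (simp only: mult.commute)
    then have "\<bar>S\<bar> \<le> 1 / (\<alpha> / (6 * E * real N))" using pos_le_divide_eq[OF pos] by blast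
    also have "1 / (\<alpha> / (6 * E * real N)) = 6 * E / \<alpha> * real N" using a pos0 by (simp add: field_simps)
    finally have fin: "\<bar>S\<bar> \<le> 6 * exp (pi/\<alpha>) / \<alpha> * real N" unfolding E_def .
    have "0 \<le> H * (if near1 \<alpha> KM m n then 1 else 0)" using H0 by simp
    then show ?thesis using fin by linarith
  qed
qed



lemma card_near:
  fixes y :: real assumes "y > 0"
  shows "card {n\<in>{1..N}. \<bar>real n - y\<bar> < 1} \<le> 2"
proof -
  have "{n\<in>{1..N}. \<bar>real n - y\<bar> < 1} \<subseteq> {nat \<lfloor>y\<rfloor>, nat \<lfloor>y\<rfloor> + 1}"
  proof
    fix n assume "n \<in> {n\<in>{1..N}. \<bar>real n - y\<bar> < 1}"
    then have h: "\<bar>real n - y\<bar> < 1" by simp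
    have "of_int \<lfloor>y\<rfloor> \<le> y" "y < of_int \<lfloor>y\<rfloor> + 1" by linarith+
    then have "int n \<ge> \<lfloor>y\<rfloor>" "int n \<le> \<lfloor>y\<rfloor> + 1" using h by linarith+
    then show "n \<in> {nat \<lfloor>y\<rfloor>, nat \<lfloor>y\<rfloor> + 1}" using assms by auto
  qed
  then have "card {n\<in>{1..N}. \<bar>real n - y\<bar> < 1} \<le> card {nat \<lfloor>y\<rfloor>, nat \<lfloor>y\<rfloor> + 1}"
    by (intro card_mono) auto
  also have "\<dots> \<le> 2" by simp
  finally show ?thesis .
qed

lemma geom_bound:
  fixes q :: real assumes "0 \<le> q" "q < 1"
  shows "(\<Sum>k\<le>K. q ^ k) \<le> 1 / (1 - q)"
proof -
  have "(\<Sum>k\<le>K. q ^ k) = (\<Sum>k<Suc K. q ^ k)" by (simp add: lessThan_Suc_atMost)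
  also have "\<dots> = (1 - q ^ Suc K) / (1 - q)" by (subst sum_gp_strict) (use assms in auto)
  also have "\<dots> \<le> 1 / (1 - q)" using assms by (intro divide_right_mono) auto
  finally show ?thesis .
qed

lemma count_near:
  fixes \<alpha> :: real and m N KM :: nat
  assumes a: "\<alpha> > 0" and m: "m \<ge> 1"
  shows "(\<Sum>n\<in>{1..N}. (if near1 \<alpha> KM m n then 1 else 0) / sqrt (real n))
      \<le> 2 * sqrt 2 * (exp (pi/\<alpha>) / (exp (pi/\<alpha>) - 1)) / sqrt (real m)"
proof -
  define E where "E = exp (pi/\<alpha>)"
  have E1: "E > 1" unfolding E_def using a by simp
  define y where "y k = real m * E ^ (2*k)" for k
  have y0: "y k > 0" for k unfolding y_def using m E1 by simp
  have sy: "sqrt (y k) = sqrt (real m) * E ^ k" for k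
    unfolding y_def power_even_eq using E1 by (simp add: real_sqrt_mult)
  define g where "g n k = (if \<bar>real n - y k\<bar> < 1 then sqrt 2 / sqrt (y k) else 0)" for n k
  have g0: "g n k \<ge> 0" for n k unfolding g_def using y0[of k] by simp
  have pt: "(if near1 \<alpha> KM m n then 1 else 0) / sqrt (real n) \<le> (\<Sum>k\<le>KM. g n k)" if n: "n \<in> {1..N}" for n
  proof (cases "near1 \<alpha> KM m n")
    case True
    then obtain k where k: "k \<le> KM" "\<bar>real n - y k\<bar> < 1" unfolding near1_def y_def E_def by auto
    have "y k \<le> 2 * real n" using k n by auto
    then have "sqrt (y k) \<le> sqrt 2 * sqrt (real n)" by (simp flip: real_sqrt_mult)
    then have "1 / sqrt (real n) \<le> sqrt 2 / sqrt (y k)" using n y0[of k]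
      by (simp add: field_simps)
    also have "\<dots> = g n k" unfolding g_def using k by simp
    also have "\<dots> \<le> (\<Sum>k\<le>KM. g n k)" using k g0 by (intro member_le_sum) auto
    finally show ?thesis using True by simp
  next
    case False
    then show ?thesis using g0 by (simp add: sum_nonneg)
  qed
  have "(\<Sum>n\<in>{1..N}. (if near1 \<alpha> KM m n then 1 else 0) / sqrt (real n))
       \<le> (\<Sum>n\<in>{1..N}. \<Sum>k\<le>KM. g n k)" by (intro sum_mono pt)
  also have "\<dots> = (\<Sum>k\<le>KM. \<Sum>n\<in>{1..N}. g n k)" by (rule sum.swap)
  also have "\<dots> \<le> (\<Sum>k\<le>KM. 2 * sqrt 2 / sqrt (y k))"
  proof (intro sum_mono)
    fix k
    have "(\<Sum>n\<in>{1..N}. g n k) = (\<Sum>n\<in>{n\<in>{1..N}. \<bar>real n - y k\<bar> < 1}. sqrt 2 / sqrt (y k))"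
      unfolding g_def by (subst sum.inter_filter) auto
    also have "\<dots> = real (card {n\<in>{1..N}. \<bar>real n - y k\<bar> < 1}) * (sqrt 2 / sqrt (y k))" by simp
    also have "\<dots> \<le> 2 * (sqrt 2 / sqrt (y k))"
      using card_near[OF y0[of k], of N] y0[of k] by (intro mult_right_mono) auto
    finally show "(\<Sum>n\<in>{1..N}. g n k) \<le> 2 * sqrt 2 / sqrt (y k)" by simp
  qed
  also have "\<dots> = 2 * sqrt 2 / sqrt (real m) * (\<Sum>k\<le>KM. (1/E) ^ k)"
    unfolding sy sum_distrib_left by (intro sum.cong refl) (simp add: power_divide)
  also have "\<dots> \<le> 2 * sqrt 2 / sqrt (real m) * (1 / (1 - 1/E))"
    using E1 by (intro mult_left_mono geom_bound) auto
  also have "1 / (1 - 1/E) = E / (E - 1)" using E1 by (simp add: field_simps)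
  finally show ?thesis unfolding E_def by (simp add: mult.commute)
qed



lemma harm_bound: "(\<Sum>m\<in>{1..N}. 1 / real m) \<le> 1 + ln (real N)"
proof (cases N)
  case 0 then show ?thesis by simp
next
  case (Suc n)
  have "decseq (\<lambda>n. harm (Suc n) - ln (real (Suc n)))" by (rule decseq_harm_diff_ln)
  then have "harm (Suc n) - ln (real (Suc n)) \<le> harm (Suc 0) - ln (real (Suc 0))"
    unfolding decseq_def by blast
  moreover have "harm (Suc 0) = (1::real)" by (simp add: harm_def)
  ultimately have "harm (Suc n) \<le> 1 + ln (real (Suc n))" by simp
  then show ?thesis unfolding Suc harm_def by (simp add: divide_inverse)
qed

lemma sum_inv_sqrt: "(\<Sum>m\<in>{1..N}. 1 / sqrt (real m)) \<le> 2 * sqrt (real N)"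
proof (induction N)
  case 0 then show ?case by simp
next
  case (Suc n)
  have g: "sqrt (real n * real (Suc n)) \<le> (real n + real (Suc n)) / 2"
    by (rule arith_geo_mean_sqrt) auto
  have p: "sqrt (real (Suc n)) > 0" by simp
  have "1 / sqrt (real (Suc n)) \<le> 2 * sqrt (real (Suc n)) - 2 * sqrt (real n)"
  proof -
    have "1 \<le> 2 * real (Suc n) - 2 * sqrt (real n * real (Suc n))" using g by simp
    also have "2 * real (Suc n) = 2 * (sqrt (real (Suc n)) * sqrt (real (Suc n)))" by (simp only: real_sqrt_mult_self abs_of_nat)
    also have "sqrt (real n * real (Suc n)) = sqrt (real n) * sqrt (real (Suc n))" by (simp add: real_sqrt_mult)
    finally have "1 \<le> (2 * sqrt (real (Suc n)) - 2 * sqrt (real n)) * sqrt (real (Suc n))"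
      by (simp add: algebra_simps)
    then show ?thesis using p by (simp add: divide_le_eq)
  qed
  moreover have "(\<Sum>m\<in>{1..Suc n}. 1 / sqrt (real m)) = (\<Sum>m\<in>{1..n}. 1 / sqrt (real m)) + 1 / sqrt (real (Suc n))"
    by simp
  ultimately show ?case using Suc.IH by linarith
qed

lemma combine:
  fixes S :: "nat \<Rightarrow> nat \<Rightarrow> real" and H C \<alpha> :: real and N KM :: nat
  assumes a: "\<alpha> > 0" and H0: "H \<ge> 0" and C0: "C \<ge> 0"
    and bnd: "\<And>m n. m \<in> {1..N} \<Longrightarrow> n \<in> {1..N} \<Longrightarrow>
       \<bar>S m n\<bar> \<le> H * ((if near1 \<alpha> KM m n then 1 else 0) + (if near1 \<alpha> KM n m then 1 else 0)) + C * real N"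
  shows "(\<Sum>m\<in>{1..N}. \<Sum>n\<in>{1..N}. \<bar>S m n\<bar> / (sqrt (real m) * sqrt (real n)))
     \<le> 2 * H * (2 * sqrt 2 * (exp (pi/\<alpha>) / (exp (pi/\<alpha>) - 1))) * (1 + ln (real N)) + C * real N * (4 * real N)"
proof -
  define c1 where "c1 = 2 * sqrt 2 * (exp (pi/\<alpha>) / (exp (pi/\<alpha>) - 1))"
  have E1: "exp (pi/\<alpha>) > 1" using a by simp
  have c10: "c1 \<ge> 0" unfolding c1_def using E1 by simp
  define i where "i m n = (if near1 \<alpha> KM m n then 1 else (0::real))" for m n
  define A where "A = (\<Sum>m\<in>{1..N}. \<Sum>n\<in>{1..N}. i m n / (sqrt (real m) * sqrt (real n)))"
  define A' where "A' = (\<Sum>m\<in>{1..N}. \<Sum>n\<in>{1..N}. i n m / (sqrt (real m) * sqrt (real n)))"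
  define B where "B = (\<Sum>m\<in>{1..N}. \<Sum>n\<in>{1..N}. 1 / (sqrt (real m) * sqrt (real n)))"
  have "(\<Sum>m\<in>{1..N}. \<Sum>n\<in>{1..N}. \<bar>S m n\<bar> / (sqrt (real m) * sqrt (real n)))
     \<le> (\<Sum>m\<in>{1..N}. \<Sum>n\<in>{1..N}. (H * (i m n + i n m) + C * real N) / (sqrt (real m) * sqrt (real n)))"
  proof (intro sum_mono divide_right_mono)
    fix m n assume mn: "m \<in> {1..N}" "n \<in> {1..N}"
    show "\<bar>S m n\<bar> \<le> H * (i m n + i n m) + C * real N" using bnd[OF mn] unfolding i_def .
    show "0 \<le> sqrt (real m) * sqrt (real n)" by simp
  qed
  also have "\<dots> = H * A + H * A' + C * real N * B"
    unfolding A_def A'_def B_def sum_distrib_left sum.distrib[symmetric]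
    by (intro sum.cong refl) (simp add: add_divide_distrib distrib_left)
  finally have X: "(\<Sum>m\<in>{1..N}. \<Sum>n\<in>{1..N}. \<bar>S m n\<bar> / (sqrt (real m) * sqrt (real n))) \<le> H * A + H * A' + C * real N * B" .
  have AA: "A' = A" unfolding A'_def A_def
    by (subst sum.swap) (simp add: mult.commute)
  have Ab: "A \<le> c1 * (1 + ln (real N))"
  proof -
    have "A = (\<Sum>m\<in>{1..N}. (1 / sqrt (real m)) * (\<Sum>n\<in>{1..N}. i m n / sqrt (real n)))"
      unfolding A_def sum_distrib_left by (intro sum.cong refl) simp
    also have "\<dots> \<le> (\<Sum>m\<in>{1..N}. (1 / sqrt (real m)) * (c1 / sqrt (real m)))"
    proof (intro sum_mono mult_left_mono)
      fix m assume "m \<in> {1..N}"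
      then show "(\<Sum>n\<in>{1..N}. i m n / sqrt (real n)) \<le> c1 / sqrt (real m)"
        using count_near[OF a, of m KM N] unfolding i_def c1_def by simp
    qed simp
    also have "\<dots> = c1 * (\<Sum>m\<in>{1..N}. 1 / real m)"
      unfolding sum_distrib_left by (intro sum.cong refl) simp
    also have "\<dots> \<le> c1 * (1 + ln (real N))" using c10 harm_bound by (intro mult_left_mono)
    finally show ?thesis .
  qed
  have Bb: "B \<le> 4 * real N"
  proof -
    have "B = (\<Sum>m\<in>{1..N}. 1 / sqrt (real m)) * (\<Sum>n\<in>{1..N}. 1 / sqrt (real n))"
      unfolding B_def sum_product by simp
    also have "\<dots> \<le> (2 * sqrt (real N)) * (2 * sqrt (real N))"
      using sum_inv_sqrt[of N] by (intro mult_mono) (auto intro: sum_nonneg)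
    also have "\<dots> = 4 * real N" by simp
    finally show ?thesis .
  qed
  have "H * A \<le> H * (c1 * (1 + ln (real N)))" using Ab H0 by (rule mult_left_mono)
  moreover have "C * real N * B \<le> C * real N * (4 * real N)" using Bb C0 by (intro mult_left_mono) auto
  moreover have e: "2 * H * c1 * (1 + ln (real N)) = 2 * (H * (c1 * (1 + ln (real N))))" by simp
  ultimately have "(\<Sum>m\<in>{1..N}. \<Sum>n\<in>{1..N}. \<bar>S m n\<bar> / (sqrt (real m) * sqrt (real n)))
     \<le> 2 * H * c1 * (1 + ln (real N)) + C * real N * (4 * real N)" using X unfolding AA by linarith
  then show ?thesis by (simp only: c1_def)
qed




lemma moebius_abs: "\<bar>real_of_int (moebius_mu n)\<bar> \<le> 1"
  unfolding moebius_mu_def by (auto simp: abs_mult)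

lemma av_bound:
  assumes T: "T > 1" and th: "\<theta> > 0" and n: "n \<in> {1..nat \<lfloor>T powr \<theta>\<rfloor>}"
  shows "\<bar>av \<theta> T n\<bar> \<le> 1 / sqrt (real n)"
proof -
  have n1: "n \<ge> 1" using n by simp
  have "real n \<le> of_int \<lfloor>T powr \<theta>\<rfloor>" using n by auto
  also have "\<dots> \<le> T powr \<theta>" by simp
  finally have nT: "real n \<le> T powr \<theta>" .
  have lT: "ln (T powr \<theta>) > 0" using T th by simp
  have "ln (real n) \<le> ln (T powr \<theta>)" using nT n1 T by (subst ln_le_cancel_iff) auto
  moreover have "ln (real n) \<ge> 0" using n1 by simp
  ultimately have w: "0 \<le> 1 - ln (real n) / ln (T powr \<theta>)" "1 - ln (real n) / ln (T powr \<theta>) \<le> 1"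
    using lT by (simp_all add: divide_le_eq_1)
  have "\<bar>av \<theta> T n\<bar> = \<bar>real_of_int (moebius_mu n)\<bar> * (1 - ln (real n) / ln (T powr \<theta>)) / sqrt (real n)"
    unfolding av_def using w by (simp add: abs_mult)
  also have "\<dots> \<le> 1 * 1 / sqrt (real n)"
    using moebius_abs[of n] w by (intro divide_right_mono mult_mono) auto
  finally show ?thesis by simp
qed


lemma S_bound:
  fixes \<alpha> \<beta> A0 :: real and H N KM m n :: nat
  assumes a: "\<alpha> > 0" and mn: "m \<in> {1..N}" "n \<in> {1..N}"
    and KM: "\<alpha> * ln (real N) / (2*pi) + 1/2 \<le> real KM"
  shows "\<bar>\<Sum>j<H. cos ((\<alpha> * (A0 + real j) + \<beta>) * (ln (real m) - ln (real n)))\<bar>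
     \<le> real H * ((if near1 \<alpha> KM m n then 1 else 0) + (if near1 \<alpha> KM n m then 1 else 0))
        + 6 * exp (pi/\<alpha>) / \<alpha> * real N"
proof -
  define S where "S = (\<Sum>j<H. cos ((\<alpha> * (A0 + real j) + \<beta>) * (ln (real m) - ln (real n))))"
  have Seq: "S = (\<Sum>j<H. cos ((A0 + real j) * (\<alpha> * (ln (real m) - ln (real n))) + \<beta> * (ln (real m) - ln (real n))))"
    unfolding S_def by (intro sum.cong refl) (simp add: algebra_simps)
  have S1: "\<bar>S\<bar> \<le> real H" unfolding Seq by (rule tele_bound2)
  have S2: "\<bar>sin (\<alpha> * (ln (real m) - ln (real n)) / 2)\<bar> * \<bar>S\<bar> \<le> 1" unfolding Seq by (rule tele_bound)
  have sn: "\<bar>sin (\<alpha> * (ln (real n) - ln (real m)) / 2)\<bar> = \<bar>sin (\<alpha> * (ln (real m) - ln (real n)) / 2)\<bar>"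
  proof -
    have "\<alpha> * (ln (real n) - ln (real m)) / 2 = - (\<alpha> * (ln (real m) - ln (real n)) / 2)" by (simp add: field_simps)
    then show ?thesis by simp
  qed
  have lnN: "ln (real k) \<le> ln (real N)" if "k \<in> {1..N}" for k using that by simp
  have ln0: "ln (real k) \<ge> 0" if "k \<in> {1..N}" for k using that by simp
  have i0: "0 \<le> real H * (if P then 1 else 0)" for P by simp
  have e: "real H * (if near1 \<alpha> KM m n then 1 else 0) + real H * (if near1 \<alpha> KM n m then 1 else 0)
     = real H * ((if near1 \<alpha> KM m n then 1 else 0) + (if near1 \<alpha> KM n m then 1 else 0))" by (simp only: distrib_left)
  show ?thesis
  proof (cases "m \<le> n")
    case True
    have "\<alpha> * (ln (real n) - ln (real m)) / (2*pi) \<le> \<alpha> * ln (real N) / (2*pi)"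
      using lnN[OF mn(2)] ln0[OF mn(1)] a by (intro divide_right_mono mult_left_mono) auto
    then have "\<bar>S\<bar> \<le> real H * (if near1 \<alpha> KM m n then 1 else 0) + 6 * exp (pi/\<alpha>) / \<alpha> * real N"
      using pt_le[OF a _ True _ S1, of N KM] mn S2 sn KM by auto
    then have "\<bar>S\<bar> \<le> real H * ((if near1 \<alpha> KM m n then 1 else 0) + (if near1 \<alpha> KM n m then 1 else 0))
        + 6 * exp (pi/\<alpha>) / \<alpha> * real N"
      using i0[of "near1 \<alpha> KM n m"] e by linarith
    then show ?thesis unfolding S_def .
  next
    case False
    then have nm: "n \<le> m" by simp
    have "\<alpha> * (ln (real m) - ln (real n)) / (2*pi) \<le> \<alpha> * ln (real N) / (2*pi)"
      using lnN[OF mn(1)] ln0[OF mn(2)] a by (intro divide_right_mono mult_left_mono) auto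
    then have "\<bar>S\<bar> \<le> real H * (if near1 \<alpha> KM n m then 1 else 0) + 6 * exp (pi/\<alpha>) / \<alpha> * real N"
      using pt_le[OF a _ nm _ S1, of N KM] mn S2 KM by auto
    then have "\<bar>S\<bar> \<le> real H * ((if near1 \<alpha> KM m n then 1 else 0) + (if near1 \<alpha> KM n m then 1 else 0))
        + 6 * exp (pi/\<alpha>) / \<alpha> * real N"
      using i0[of "near1 \<alpha> KM m n"] e by linarith
    then show ?thesis unfolding S_def .
  qed
qed


lemma sum_bound:
  fixes \<theta> T \<alpha> \<beta> A0 :: real and H :: nat
  assumes T: "T > 1" and th: "\<theta> > 0" and a: "\<alpha> > 0"
  shows "(\<Sum>j<H. (cmod (M_theta \<theta> T (Complex (1/2) (\<alpha> * (A0 + real j) + \<beta>))))\<^sup>2)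
    \<le> 2 * real H * (2 * sqrt 2 * (exp (pi/\<alpha>) / (exp (pi/\<alpha>) - 1))) * (1 + ln (real (nat \<lfloor>T powr \<theta>\<rfloor>)))
       + 6 * exp (pi/\<alpha>) / \<alpha> * real (nat \<lfloor>T powr \<theta>\<rfloor>) * (4 * real (nat \<lfloor>T powr \<theta>\<rfloor>))"
proof -
  define N where "N = nat \<lfloor>T powr \<theta>\<rfloor>"
  define KM where "KM = nat \<lceil>\<alpha> * ln (real N) / (2*pi) + 1/2\<rceil>"
  have KM: "\<alpha> * ln (real N) / (2*pi) + 1/2 \<le> real KM" unfolding KM_def by linarith
  define t where "t j = \<alpha> * (A0 + real j) + \<beta>" for j
  define S where "S m n = (\<Sum>j<H. cos (t j * (ln (real m) - ln (real n))))" for m n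
  have "(\<Sum>j<H. (cmod (M_theta \<theta> T (Complex (1/2) (t j))))\<^sup>2)
      = (\<Sum>j<H. \<Sum>m\<in>{1..N}. \<Sum>n\<in>{1..N}. av \<theta> T m * av \<theta> T n * cos (t j * (ln (real m) - ln (real n))))"
    unfolding cmod_sq N_def ..
  also have "\<dots> = (\<Sum>m\<in>{1..N}. \<Sum>j<H. \<Sum>n\<in>{1..N}. av \<theta> T m * av \<theta> T n * cos (t j * (ln (real m) - ln (real n))))"
    by (rule sum.swap)
  also have "\<dots> = (\<Sum>m\<in>{1..N}. \<Sum>n\<in>{1..N}. \<Sum>j<H. av \<theta> T m * av \<theta> T n * cos (t j * (ln (real m) - ln (real n))))"
    by (intro sum.cong refl sum.swap)
  also have "\<dots> = (\<Sum>m\<in>{1..N}. \<Sum>n\<in>{1..N}. av \<theta> T m * av \<theta> T n * S m n)"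
    unfolding S_def sum_distrib_left ..
  also have "\<dots> \<le> (\<Sum>m\<in>{1..N}. \<Sum>n\<in>{1..N}. \<bar>S m n\<bar> / (sqrt (real m) * sqrt (real n)))"
  proof (intro sum_mono)
    fix m n assume m: "m \<in> {1..N}" and n: "n \<in> {1..N}"
    have "av \<theta> T m * av \<theta> T n * S m n \<le> \<bar>av \<theta> T m\<bar> * \<bar>av \<theta> T n\<bar> * \<bar>S m n\<bar>"
      by (simp add: abs_mult[symmetric])
    also have "\<dots> \<le> (1 / sqrt (real m)) * (1 / sqrt (real n)) * \<bar>S m n\<bar>"
      using av_bound[OF T th, of m] av_bound[OF T th, of n] m n unfolding N_def
      by (intro mult_mono mult_right_mono) auto
    also have "\<dots> = \<bar>S m n\<bar> / (sqrt (real m) * sqrt (real n))" by simp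
    finally show "av \<theta> T m * av \<theta> T n * S m n \<le> \<bar>S m n\<bar> / (sqrt (real m) * sqrt (real n))" .
  qed
  also have "\<dots> \<le> 2 * real H * (2 * sqrt 2 * (exp (pi/\<alpha>) / (exp (pi/\<alpha>) - 1))) * (1 + ln (real N))
       + 6 * exp (pi/\<alpha>) / \<alpha> * real N * (4 * real N)"
  proof (rule combine[OF a])
    show "0 \<le> real H" by simp
    show "0 \<le> 6 * exp (pi/\<alpha>) / \<alpha>" using a by simp
    fix m n assume "m \<in> {1..N}" "n \<in> {1..N}"
    then show "\<bar>S m n\<bar> \<le> real H * ((if near1 \<alpha> KM m n then 1 else 0) + (if near1 \<alpha> KM n m then 1 else 0))
        + 6 * exp (pi/\<alpha>) / \<alpha> * real N"
      unfolding S_def t_def by (rule S_bound[OF a _ _ KM])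
  qed
  finally show ?thesis unfolding t_def N_def .
qed



lemma final_arith:
  fixes T c1 C Hr Nr :: real
  assumes T: "T \<ge> exp 1" and c1: "c1 \<ge> 0" and C: "C \<ge> 0"
    and H: "0 \<le> Hr" "Hr \<le> T + 1" and N: "0 \<le> Nr" "Nr * Nr \<le> T" and lnN: "0 \<le> 1 + ln Nr" "ln Nr \<le> ln T"
  shows "2 * Hr * c1 * (1 + ln Nr) + C * Nr * (4 * Nr) \<le> (8 * c1 + 4 * C) * (T * ln T)"
proof -
  have "exp (1::real) \<ge> 1" by simp
  then have T1: "T \<ge> 1" using T by linarith
  have "ln (exp 1) \<le> ln T" using T T1 by (subst ln_le_cancel_iff) auto
  then have lT: "ln T \<ge> 1" by simp
  have "2 * Hr * c1 * (1 + ln Nr) \<le> 2 * (T + 1) * c1 * (1 + ln T)"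
    using H c1 lnN by (intro mult_mono) auto
  also have "\<dots> \<le> 2 * (2 * T) * c1 * (2 * ln T)"
    using T1 lT c1 by (intro mult_mono) auto
  also have "\<dots> = 8 * c1 * (T * ln T)" by simp
  finally have A: "2 * Hr * c1 * (1 + ln Nr) \<le> 8 * c1 * (T * ln T)" .
  have "C * Nr * (4 * Nr) = 4 * C * (Nr * Nr)" by simp
  also have "\<dots> \<le> 4 * C * (T * 1)" using N C by (intro mult_left_mono) auto
  also have "\<dots> \<le> 4 * C * (T * ln T)" using C T1 lT by (intro mult_left_mono) auto
  finally have B: "C * Nr * (4 * Nr) \<le> 4 * C * (T * ln T)" .
  show ?thesis using A B by (simp add: algebra_simps)
qed


theorem mainTheorem9:
  fixes \<theta> \<alpha> \<beta> :: real and \<phi> :: "real \<Rightarrow> real"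
  assumes "0 < \<theta>" "\<theta> < 1/2" "\<alpha> > 0"
    and "smooth_fun \<phi>"
    and "\<And>x. 0 \<le> \<phi> x \<and> \<phi> x \<le> 1"
    and "closure {x. \<phi> x \<noteq> 0} \<subseteq> {1..2}"
  shows "(\<lambda>T. \<Sum>\<^sub>\<infinity>l\<in>(UNIV::int set).
            (cmod (M_theta \<theta> T (Complex (1/2) (\<alpha> * of_int l + \<beta>))))\<^sup>2 * \<phi> (of_int l / T))
         \<in> O(\<lambda>T. T * ln T)"
proof -
  note th = assms(1) and th2 = assms(2) and a = assms(3) and phi = assms(5) and supp = assms(6)
  define c1 where "c1 = 2 * sqrt 2 * (exp (pi/\<alpha>) / (exp (pi/\<alpha>) - 1))"
  define C where "C = 6 * exp (pi/\<alpha>) / \<alpha>"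
  have c10: "c1 \<ge> 0" unfolding c1_def using a by simp
  have C0: "C \<ge> 0" unfolding C_def using a by simp
  define F where "F T = (\<Sum>\<^sub>\<infinity>l\<in>(UNIV::int set).
            (cmod (M_theta \<theta> T (Complex (1/2) (\<alpha> * of_int l + \<beta>))))\<^sup>2 * \<phi> (of_int l / T))" for T
  have key: "\<bar>F T\<bar> \<le> (8 * c1 + 4 * C) * \<bar>T * ln T\<bar>" if T: "T \<ge> exp 1" for T
  proof -
    have "exp (1::real) \<ge> 1" by simp
    then have T1: "T \<ge> 1" using T by linarith
    have "exp (1::real) > 1" by simp
    then have T1': "T > 1" using T by linarith
    have "ln (exp 1) \<le> ln T" using T T1 by (subst ln_le_cancel_iff) auto
    then have lT: "ln T \<ge> 1" by simp
    define f where "f l = (cmod (M_theta \<theta> T (Complex (1/2) (\<alpha> * of_int l + \<beta>))))\<^sup>2 * \<phi> (of_int l / T)" for l :: int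
    define A0 where "A0 = \<lceil>T\<rceil>"
    define Hn where "Hn = nat (\<lfloor>2*T\<rfloor> - \<lceil>T\<rceil> + 1)"
    define L where "L = (\<lambda>j. A0 + int j) ` {..<Hn}"
    have inj: "inj_on (\<lambda>j. A0 + int j) {..<Hn}" by (auto simp: inj_on_def)
    have suppL: "f l = 0" if "l \<notin> L" for l
    proof (rule ccontr)
      assume "f l \<noteq> 0"
      then have "\<phi> (of_int l / T) \<noteq> 0" unfolding f_def by (metis mult_zero_right)
      then have "of_int l / T \<in> closure {x. \<phi> x \<noteq> 0}" by (intro subsetD[OF closure_subset]) simp
      then have "of_int l / T \<in> {1..2}" by (rule subsetD[OF supp])
      then have "1 \<le> of_int l / T" "of_int l / T \<le> 2" by auto
      then have lb: "T \<le> of_int l" "of_int l \<le> 2 * T" using T1' by (auto simp: field_simps)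
      then have "A0 \<le> l" "l \<le> \<lfloor>2*T\<rfloor>" unfolding A0_def by (auto simp: ceiling_le_iff le_floor_iff)
      then have "nat (l - A0) \<in> {..<Hn}" "l = A0 + int (nat (l - A0))" unfolding Hn_def A0_def by auto
      then have "l \<in> L" unfolding L_def by blast
      with that show False by blast
    qed
    have "F T = infsum f L"
      unfolding F_def f_def[symmetric] by (rule infsum_cong_neutral) (use suppL in auto)
    also have "\<dots> = sum f L" unfolding L_def by simp
    also have "\<dots> = (\<Sum>j<Hn. f (A0 + int j))" unfolding L_def by (rule sum.reindex_cong[OF inj refl]) simp
    finally have FT: "F T = (\<Sum>j<Hn. f (A0 + int j))" .
    have f0: "f l \<ge> 0" for l unfolding f_def using phi by simp
    have "F T \<le> (\<Sum>j<Hn. (cmod (M_theta \<theta> T (Complex (1/2) (\<alpha> * (real_of_int A0 + real j) + \<beta>))))\<^sup>2)"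
      unfolding FT
    proof (intro sum_mono)
      fix j
      have "f (A0 + int j) \<le> (cmod (M_theta \<theta> T (Complex (1/2) (\<alpha> * of_int (A0 + int j) + \<beta>))))\<^sup>2"
        unfolding f_def using phi by (intro mult_left_le) auto
      then show "f (A0 + int j) \<le> (cmod (M_theta \<theta> T (Complex (1/2) (\<alpha> * (real_of_int A0 + real j) + \<beta>))))\<^sup>2"
        by simp
    qed
    also have "\<dots> \<le> 2 * real Hn * c1 * (1 + ln (real (nat \<lfloor>T powr \<theta>\<rfloor>)))
       + C * real (nat \<lfloor>T powr \<theta>\<rfloor>) * (4 * real (nat \<lfloor>T powr \<theta>\<rfloor>))"
      unfolding c1_def C_def by (rule sum_bound[OF T1' th a])
    also have "\<dots> \<le> (8 * c1 + 4 * C) * (T * ln T)"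
    proof (rule final_arith[OF T c10 C0])
      show "0 \<le> real Hn" by simp
      show "real Hn \<le> T + 1" unfolding Hn_def
      proof -
        have "real_of_int (\<lfloor>2*T\<rfloor> - \<lceil>T\<rceil> + 1) \<le> T + 1" by linarith
        then show "real (nat (\<lfloor>2*T\<rfloor> - \<lceil>T\<rceil> + 1)) \<le> T + 1" using T1 by linarith
      qed
      define N where "N = nat \<lfloor>T powr \<theta>\<rfloor>"
      have p: "0 \<le> T powr \<theta>" by simp
      then have "real N = of_int \<lfloor>T powr \<theta>\<rfloor>" unfolding N_def by simp
      then have NT: "real N \<le> T powr \<theta>" by linarith
      have "T powr \<theta> \<le> T powr 1" using T1 th2 by (intro powr_mono) auto
      then have NT1: "real N \<le> T" using NT T1 by simp
      show "0 \<le> real N" by simp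
      have "real N * real N \<le> T powr \<theta> * T powr \<theta>" using NT by (intro mult_mono) auto
      also have "\<dots> = T powr (2*\<theta>)" by (simp add: powr_add[symmetric])
      also have "\<dots> \<le> T powr 1" using T1 th2 by (intro powr_mono) auto
      finally show "real N * real N \<le> T" using T1 by simp
      show "ln (real N) \<le> ln T"
      proof (cases "N = 0")
        case True then show ?thesis using lT by simp
      next
        case False then show ?thesis using NT1 by (subst ln_le_cancel_iff) auto
      qed
      show "0 \<le> 1 + ln (real N)"
      proof (cases "N = 0")
        case True then show ?thesis by simp
      next
        case False then show ?thesis by simp
      qed
    qed
    finally have up: "F T \<le> (8 * c1 + 4 * C) * (T * ln T)" .
    have "F T \<ge> 0" unfolding FT using f0 by (intro sum_nonneg) auto
    moreover have "T * ln T \<ge> 0" using T1 lT by simp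
    ultimately show ?thesis using up by simp
  qed
  have "eventually (\<lambda>T. norm (F T) \<le> (8 * c1 + 4 * C) * norm (T * ln T)) at_top"
    using eventually_ge_at_top[of "exp 1"] by eventually_elim (use key in simp)
  then have "F \<in> O(\<lambda>T. T * ln T)" by (rule bigoI)
  then show ?thesis unfolding F_def .
qed


end
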